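(* Let $a,b$ be positive integers with $3\mid a+1$ and $3\mid b+1$. If the Aztec rectangle $\mathcal{AR}_{a,b}$ has a cover by L-trominoes, then $\mathcal{AR}_{a+4,b+4}$ has a cover by L-trominoes.
   Context: A cell is a unit square $[i,i+1]\times[j,j+1]$ with $i,j\in\mathbb{Z}$, labelled $(i,j)$. An L-tromino is a set of three cells equal to a $2\times 2$ block of cells with one cell removed. A cover of a region $R$ (a finite edge-connected set of cells) is a set of pairwise disjoint L-trominoes contained in $R$ whose union is $R$. For positive integers $a,b$, the Aztec rectangle $\mathcal{AR}_{a,b}$ is (up to translation) the region consisting of the cells $(i,j)\in\mathbb{Z}^2$ with $0\le i+j\le 2b$ and $1\le j-i\le 2a+1$; it has $a$ cells along its southwestern side and $b$ cells along its northwestern side. *)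

theory Defs
  imports Main
begin

type_synonym cell = "int \<times> int"

definition block2 :: "int \<Rightarrow> int \<Rightarrow> cell set" where
  "block2 i j = {(i, j), (i + 1, j), (i, j + 1), (i + 1, j + 1)}"

definition is_L_tromino :: "cell set \<Rightarrow> bool" where
  "is_L_tromino T \<longleftrightarrow> (\<exists>i j c. c \<in> block2 i j \<and> T = block2 i j - {c})"

definition is_cover :: "cell set set \<Rightarrow> cell set \<Rightarrow> bool" where
  "is_cover C R \<longleftrightarrow>
     (\<forall>T\<in>C. is_L_tromino T \<and> T \<subseteq> R) \<and>
     (\<forall>T\<in>C. \<forall>T'\<in>C. T \<noteq> T' \<longrightarrow> T \<inter> T' = {}) \<and>
     \<Union>C = R"

definition has_cover :: "cell set \<Rightarrow> bool" where
  "has_cover R \<longleftrightarrow> (\<exists>C. is_cover C R)"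

definition aztec_rectangle :: "nat \<Rightarrow> nat \<Rightarrow> cell set" where
  "aztec_rectangle a b =
     {(i, j). 0 \<le> i + j \<and> i + j \<le> 2 * int b \<and> 1 \<le> j - i \<and> j - i \<le> 2 * int a + 1}"

end

theory Submission imports Defs begin

definition LA :: "int \<Rightarrow> int \<Rightarrow> cell set" where "LA i j = block2 i j - {(i,j)}"
definition LB :: "int \<Rightarrow> int \<Rightarrow> cell set" where "LB i j = block2 i j - {(i+1,j)}"
definition LC :: "int \<Rightarrow> int \<Rightarrow> cell set" where "LC i j = block2 i j - {(i,j+1)}"
definition LD :: "int \<Rightarrow> int \<Rightarrow> cell set" where "LD i j = block2 i j - {(i+1,j+1)}"

lemma block2_mem: "(i,j) \<in> block2 i j" "(i+1,j) \<in> block2 i j" "(i,j+1) \<in> block2 i j" "(i+1,j+1) \<in> block2 i j"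
  by (simp_all add: block2_def)

lemma Ltr: "c \<in> block2 i j \<Longrightarrow> is_L_tromino (block2 i j - {c})"
  unfolding is_L_tromino_def by blast

lemma L_trom: "is_L_tromino (LA i j)" "is_L_tromino (LB i j)" "is_L_tromino (LC i j)" "is_L_tromino (LD i j)"
  unfolding LA_def LB_def LC_def LD_def
  by (simp_all add: Ltr block2_mem)

lemma L_eq: "LA i j = {(i+1,j),(i,j+1),(i+1,j+1)}" "LB i j = {(i,j),(i,j+1),(i+1,j+1)}"
  "LC i j = {(i,j),(i+1,j),(i+1,j+1)}" "LD i j = {(i,j),(i+1,j),(i,j+1)}"
  unfolding LA_def LB_def LC_def LD_def block2_def by auto

lemma hc_empty: "has_cover {}"
  unfolding has_cover_def is_cover_def by (rule exI[of _ "{}"]) auto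

lemma hc_union: assumes "has_cover A" "has_cover B" "A \<inter> B = {}" shows "has_cover (A \<union> B)"
proof -
  obtain CA CB where a: "is_cover CA A" and b: "is_cover CB B" using assms unfolding has_cover_def by blast
  have a1: "\<forall>T\<in>CA. is_L_tromino T \<and> T \<subseteq> A" and a2: "\<forall>T\<in>CA. \<forall>T'\<in>CA. T \<noteq> T' \<longrightarrow> T \<inter> T' = {}"
    and a3: "\<Union>CA = A" using a unfolding is_cover_def by auto
  have b1: "\<forall>T\<in>CB. is_L_tromino T \<and> T \<subseteq> B" and b2: "\<forall>T\<in>CB. \<forall>T'\<in>CB. T \<noteq> T' \<longrightarrow> T \<inter> T' = {}"
    and b3: "\<Union>CB = B" using b unfolding is_cover_def by auto
  have c1: "\<forall>T\<in>CA \<union> CB. is_L_tromino T \<and> T \<subseteq> A \<union> B" using a1 b1 by blast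
  have c2: "T \<inter> T' = {}" if "T \<in> CA \<union> CB" "T' \<in> CA \<union> CB" "T \<noteq> T'" for T T'
  proof -
    { assume "T \<in> CA" "T' \<in> CB"
      hence "T \<subseteq> A" "T' \<subseteq> B" using a1 b1 by auto
      hence ?thesis using assms(3) by blast }
    moreover
    { assume "T \<in> CB" "T' \<in> CA"
      hence "T \<subseteq> B" "T' \<subseteq> A" using a1 b1 by auto
      hence ?thesis using assms(3) by blast }
    ultimately show ?thesis using that a2 b2 by blast
  qed
  have c3: "\<Union>(CA \<union> CB) = A \<union> B" using a3 b3 by auto
  have "is_cover (CA \<union> CB) (A \<union> B)" unfolding is_cover_def using c1 c2 c3 by blast
  thus ?thesis unfolding has_cover_def by blast
qed

lemma hc_trom: assumes "is_L_tromino T" "T \<inter> B = {}" "has_cover B" shows "has_cover (T \<union> B)"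
proof -
  have "is_cover {T} T" using assms(1) unfolding is_cover_def by auto
  hence "has_cover T" unfolding has_cover_def by blast
  thus ?thesis using hc_union assms by blast
qed

lemma hc_trom': assumes "has_cover B" "is_L_tromino T" "B \<inter> T = {}" shows "has_cover (B \<union> T)"
  using hc_trom[OF assms(2) _ assms(1)] assms(3) by (simp add: Un_commute Int_commute)

lemma int_upto: "(lo::int) \<le> i \<Longrightarrow> i \<le> hi \<Longrightarrow> i \<in> set [lo..hi]" by simp

lemma box_enum: assumes "\<And>i j. P i j \<Longrightarrow> i \<in> set xs \<and> j \<in> set ys"
  shows "{(i,j). P i j} \<subseteq> set (filter (\<lambda>(i,j). P i j) (List.product xs ys))"
  using assms by auto


definition F0 :: "cell set" where "F0 = {(i,j). 0 \<le> i+j \<and> i+j \<le> 12 \<and> 1 \<le> j-i \<and> j-i \<le> 13 \<and> \<not> (i+j \<le> 4 \<and> j-i \<le> (5::int))}"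

lemma F0_eq: "F0 = {} \<union> LA (-6) 5 \<union> LC (-6) 7 \<union> LA (-4) 3 \<union> LB (-4) 5 \<union> LB (-4) 7 \<union> LC (-4) 9 \<union> LA (-3) 4 \<union> LA (-3) 6 \<union> LA (-2) 7 \<union> LB (-2) 9 \<union> LC (-2) 11 \<union> LB (-1) 5 \<union> LA (-1) 8 \<union> LA 0 4 \<union> LA 0 6 \<union> LA 0 9 \<union> LD 0 11 \<union> LA 1 7 \<union> LB 2 3 \<union> LB 2 5 \<union> LD 2 9 \<union> LC 3 5 \<union> LB 3 7 \<union> LA 4 6" (is "_ = ?R")
proof
  have "F0 \<subseteq> set (filter (\<lambda>(i,j). 0 \<le> i+j \<and> i+j \<le> 12 \<and> 1 \<le> j-i \<and> j-i \<le> 13 \<and> \<not> (i+j \<le> 4 \<and> j-i \<le> (5::int))) (List.product [-6..5] [3..12]))"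
    unfolding F0_def by (rule box_enum) (simp only: set_upto atLeastAtMost_iff, presburger)
  also have "\<dots> \<subseteq> ?R" by (simp add: upto.simps L_eq)
  finally show "F0 \<subseteq> ?R" .
  show "?R \<subseteq> F0" unfolding F0_def by (simp add: L_eq)
qed

lemma F0_cover: "has_cover F0"
  unfolding F0_eq by (intro hc_trom' L_trom hc_empty; simp add: L_eq)

definition B0 :: "cell set" where "B0 = {(i,j). 1 \<le> i+j \<and> i+j \<le> 8 \<and> 1 \<le> j-i \<and> j-i \<le> (6::int)}"

lemma B0_eq: "B0 = {} \<union> LA (-2) 2 \<union> LC (-2) 4 \<union> LB 0 1 \<union> LB 0 3 \<union> LD 0 5 \<union> LC 1 3 \<union> LD 1 6 \<union> LA 2 4" (is "_ = ?R")
proof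
  have "B0 \<subseteq> set (filter (\<lambda>(i,j). 1 \<le> i+j \<and> i+j \<le> 8 \<and> 1 \<le> j-i \<and> j-i \<le> (6::int)) (List.product [-2..3] [1..7]))"
    unfolding B0_def by (rule box_enum) (simp only: set_upto atLeastAtMost_iff, presburger)
  also have "\<dots> \<subseteq> ?R" by (simp add: upto.simps L_eq)
  finally show "B0 \<subseteq> ?R" .
  show "?R \<subseteq> B0" unfolding B0_def by (simp add: L_eq)
qed

lemma B0_cover: "has_cover B0"
  unfolding B0_eq by (intro hc_trom' L_trom hc_empty; simp add: L_eq)

definition K0 :: "cell set" where "K0 = {(i,j). 0 \<le> i+j \<and> i+j \<le> 5 \<and> 2 \<le> j-i \<and> j-i \<le> (9::int)}"

lemma K0_eq: "K0 = {} \<union> LA (-4) 3 \<union> LC (-4) 5 \<union> LA (-2) 1 \<union> LC (-2) 3 \<union> LB (-2) 4 \<union> LD (-2) 6 \<union> LB 0 2 \<union> LD 0 4" (is "_ = ?R")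
proof
  have "K0 \<subseteq> set (filter (\<lambda>(i,j). 0 \<le> i+j \<and> i+j \<le> 5 \<and> 2 \<le> j-i \<and> j-i \<le> (9::int)) (List.product [-4..1] [1..7]))"
    unfolding K0_def by (rule box_enum) (simp only: set_upto atLeastAtMost_iff, presburger)
  also have "\<dots> \<subseteq> ?R" by (simp add: upto.simps L_eq)
  finally show "K0 \<subseteq> ?R" .
  show "?R \<subseteq> K0" unfolding K0_def by (simp add: L_eq)
qed

lemma K0_cover: "has_cover K0"
  unfolding K0_eq by (intro hc_trom' L_trom hc_empty; simp add: L_eq)


definition sh :: "int \<Rightarrow> int \<Rightarrow> cell set \<Rightarrow> cell set" where
  "sh u v R = {(i,j). (i-u, j-v) \<in> R}"

lemma mem_sh[simp]: "(x,y) \<in> sh u v R \<longleftrightarrow> (x-u, y-v) \<in> R"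
  unfolding sh_def by simp

lemma sh_block2: "sh u v (block2 i j) = block2 (i+u) (j+v)"
  unfolding sh_def block2_def by auto

lemma sh_diff: "sh u v (A - B) = sh u v A - sh u v B" unfolding sh_def by auto
lemma sh_single: "sh u v {(x,y)} = {(x+u,y+v)}" unfolding sh_def by auto
lemma sh_inv: "sh (-u) (-v) (sh u v A) = A" unfolding sh_def by auto
lemma sh_Int: "sh u v A \<inter> sh u v B = sh u v (A \<inter> B)" unfolding sh_def by auto
lemma sh_empty: "sh u v {} = {}" unfolding sh_def by auto
lemma sh_mono: "A \<subseteq> B \<Longrightarrow> sh u v A \<subseteq> sh u v B" unfolding sh_def by auto
lemma sh_Union: "\<Union>(sh u v ` C) = sh u v (\<Union>C)" unfolding sh_def by auto

lemma sh_trom: assumes "is_L_tromino T" shows "is_L_tromino (sh u v T)"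
proof -
  obtain i j c where c: "c \<in> block2 i j" "T = block2 i j - {c}" using assms unfolding is_L_tromino_def by blast
  obtain x y where xy: "c = (x,y)" by (cases c)
  have "sh u v T = block2 (i+u) (j+v) - {(x+u,y+v)}"
    unfolding c xy sh_diff sh_block2 sh_single ..
  moreover have "(x+u,y+v) \<in> block2 (i+u) (j+v)" using c(1) unfolding xy block2_def by auto
  ultimately show ?thesis unfolding is_L_tromino_def by blast
qed

lemma hc_shift: assumes "has_cover R" shows "has_cover (sh u v R)"
proof -
  obtain C where C: "is_cover C R" using assms unfolding has_cover_def by blast
  have 1: "\<forall>T\<in>C. is_L_tromino T \<and> T \<subseteq> R" and 2: "\<forall>T\<in>C. \<forall>T'\<in>C. T \<noteq> T' \<longrightarrow> T \<inter> T' = {}"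
    and 3: "\<Union>C = R" using C unfolding is_cover_def by auto
  have "is_cover (sh u v ` C) (sh u v R)"
    unfolding is_cover_def
  proof (intro conjI ballI impI)
    fix T assume "T \<in> sh u v ` C"
    then obtain T0 where "T0 \<in> C" "T = sh u v T0" by blast
    thus "is_L_tromino T" "T \<subseteq> sh u v R" using 1 sh_trom sh_mono by auto
  next
    fix T T' assume "T \<in> sh u v ` C" "T' \<in> sh u v ` C" "T \<noteq> T'"
    then obtain T0 T0' where "T0 \<in> C" "T = sh u v T0" "T0' \<in> C" "T' = sh u v T0'" by blast
    moreover have "T0 \<noteq> T0'" using \<open>T \<noteq> T'\<close> calculation by auto
    ultimately show "T \<inter> T' = {}" using 2 by (simp add: sh_Int sh_empty)
  next
    show "\<Union>(sh u v ` C) = sh u v R" using 3 sh_Union by simp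
  qed
  thus ?thesis unfolding has_cover_def by blast
qed

definition G0 :: "nat \<Rightarrow> cell set" where
  "G0 n = {(i,j). 1 \<le> i+j \<and> i+j \<le> 8 \<and> 1 \<le> j-i \<and> j-i \<le> 6 * int n}"

lemma G0_cover: "has_cover (G0 n)"
proof (induction n)
  case 0
  have "G0 0 = {}" unfolding G0_def by auto
  thus ?case using hc_empty by simp
next
  case (Suc n)
  have e: "G0 (Suc n) = G0 n \<union> sh (-3 * int n) (3 * int n) B0"
    unfolding G0_def B0_def by (auto simp: algebra_simps)
  have d: "G0 n \<inter> sh (-3 * int n) (3 * int n) B0 = {}"
    unfolding G0_def B0_def by auto
  show ?case unfolding e using hc_union[OF Suc hc_shift[OF B0_cover] d] .
qed

definition H0 :: "nat \<Rightarrow> cell set" where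
  "H0 n = {(i,j). 0 \<le> i+j \<and> i+j \<le> 6 * int n - 1 \<and> 2 \<le> j-i \<and> j-i \<le> 9}"

lemma H0_cover: "has_cover (H0 n)"
proof (induction n)
  case 0
  have "H0 0 = {}" unfolding H0_def by auto
  thus ?case using hc_empty by simp
next
  case (Suc n)
  have e: "H0 (Suc n) = H0 n \<union> sh (3 * int n) (3 * int n) K0"
    unfolding H0_def K0_def by (auto simp: algebra_simps)
  have d: "H0 n \<inter> sh (3 * int n) (3 * int n) K0 = {}"
    unfolding H0_def K0_def by auto
  show ?case unfolding e using hc_union[OF Suc hc_shift[OF K0_cover] d] .
qed


theorem lemma3:
  fixes a b :: nat
  assumes "0 < a" and "0 < b" and "3 dvd (a + 1)" and "3 dvd (b + 1)"
    and "has_cover (aztec_rectangle a b)"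
  shows "has_cover (aztec_rectangle (a + 4) (b + 4))"
proof -
  obtain k where k: "a + 1 = 3 * k" using assms(3) by blast
  obtain l where l: "b + 1 = 3 * l" using assms(4) by blast
  define p where "p = k - 1"
  define q where "q = l - 1"
  have pa: "6 * int p = 2 * int a - 4" using k assms(1) unfolding p_def by linarith
  have qb: "6 * int q = 2 * int b - 4" using l assms(2) unfolding q_def by linarith
  define G where "G = sh (int b) (int b) (G0 p)"
  define H where "H = sh (- int a) (int a) (H0 q)"
  define F where "F = sh (int b - int a) (int a + int b - 4) F0"
  have cG: "has_cover G" unfolding G_def by (rule hc_shift[OF G0_cover])
  have cH: "has_cover H" unfolding H_def by (rule hc_shift[OF H0_cover])
  have cF: "has_cover F" unfolding F_def by (rule hc_shift[OF F0_cover])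
  have dHF: "H \<inter> F = {}" unfolding H_def F_def H0_def F0_def using qb pa by auto
  have dG: "G \<inter> (H \<union> F) = {}" unfolding G_def H_def F_def G0_def H0_def F0_def using qb pa by auto
  have dA: "aztec_rectangle a b \<inter> (G \<union> (H \<union> F)) = {}"
    unfolding aztec_rectangle_def G_def H_def F_def G0_def H0_def F0_def using qb pa by auto
  have eq: "aztec_rectangle (a + 4) (b + 4) = aztec_rectangle a b \<union> (G \<union> (H \<union> F))"
    unfolding aztec_rectangle_def G_def H_def F_def G0_def H0_def F0_def using qb pa by auto
  show ?thesis unfolding eq
    by (intro hc_union assms(5) cG cH cF dHF dG dA)
qed

end
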